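(* Let $G$ be a connected graph. Define an auxiliary graph $\Gamma$ whose vertex set is $E(G)$, where two distinct edges of $G$ are adjacent in $\Gamma$ if and only if they have the form $vw$ and $vz$ (sharing the endpoint $v$) with $w$ and $z$ non-adjacent in $G$. Let $E_1,\dots,E_k$ be the vertex sets of the connected components of $\Gamma$ (a partition of $E(G)$). Then each $E_i$ is exactly the set of edges of $G$ that belong to bicliques whose corresponding vertices lie in one and the same connected component of $KB_e(G)$, and this gives a bijection between $\{E_1,\dots,E_k\}$ and the connected components of $KB_e(G)$. In particular, $KB_e(G)$ is connected if and only if $k=1$, i.e. $E_1=E(G)$.
   Context: All graphs are finite, simple and undirected. A biclique of a graph $G$ is a maximal (with respect to inclusion) induced subgraph of $G$ that is a complete bipartite graph $K_{p,q}$ with $p,q\ge 1$. The edge-biclique graph $KB_e(G)$ is the graph with one vertex for each biclique of $G$, in which two distinct vertices are adjacent if and only if the corresponding bicliques of $G$ have at least one edge in common. *)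

theory Defs
  imports Main
begin

definition simple_graph :: "'v set \<Rightarrow> ('v \<Rightarrow> 'v \<Rightarrow> bool) \<Rightarrow> bool" where
  "simple_graph V E \<longleftrightarrow> finite V \<and> (\<forall>x y. E x y \<longrightarrow> x \<in> V \<and> y \<in> V)
     \<and> (\<forall>x y. E x y \<longrightarrow> E y x) \<and> (\<forall>x. \<not> E x x)"

definition reach :: "'v set \<Rightarrow> ('v \<Rightarrow> 'v \<Rightarrow> bool) \<Rightarrow> 'v \<Rightarrow> 'v \<Rightarrow> bool" where
  "reach V R = (\<lambda>x y. x \<in> V \<and> y \<in> V \<and> R x y)\<^sup>*\<^sup>*"

definition components :: "'v set \<Rightarrow> ('v \<Rightarrow> 'v \<Rightarrow> bool) \<Rightarrow> 'v set set" where
  "components V R = {{y \<in> V. reach V R x y} | x. x \<in> V}"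

definition connected_graph :: "'v set \<Rightarrow> ('v \<Rightarrow> 'v \<Rightarrow> bool) \<Rightarrow> bool" where
  "connected_graph V R \<longleftrightarrow> V \<noteq> {} \<and> (\<forall>x\<in>V. \<forall>y\<in>V. reach V R x y)"

definition edges :: "'v set \<Rightarrow> ('v \<Rightarrow> 'v \<Rightarrow> bool) \<Rightarrow> 'v set set" where
  "edges V E = {{u, v} | u v. u \<in> V \<and> v \<in> V \<and> E u v}"

definition induces_complete_bipartite :: "('v \<Rightarrow> 'v \<Rightarrow> bool) \<Rightarrow> 'v set \<Rightarrow> bool" where
  "induces_complete_bipartite E B \<longleftrightarrow>
     (\<exists>X Y. X \<noteq> {} \<and> Y \<noteq> {} \<and> X \<inter> Y = {} \<and> B = X \<union> Y
        \<and> (\<forall>x\<in>X. \<forall>y\<in>Y. E x y)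
        \<and> (\<forall>x\<in>X. \<forall>x'\<in>X. \<not> E x x')
        \<and> (\<forall>y\<in>Y. \<forall>y'\<in>Y. \<not> E y y'))"

definition biclique :: "'v set \<Rightarrow> ('v \<Rightarrow> 'v \<Rightarrow> bool) \<Rightarrow> 'v set \<Rightarrow> bool" where
  "biclique V E B \<longleftrightarrow> B \<subseteq> V \<and> induces_complete_bipartite E B
     \<and> (\<forall>B'. B \<subseteq> B' \<and> B' \<subseteq> V \<and> induces_complete_bipartite E B' \<longrightarrow> B' = B)"

definition bicliques :: "'v set \<Rightarrow> ('v \<Rightarrow> 'v \<Rightarrow> bool) \<Rightarrow> 'v set set" where
  "bicliques V E = {B. biclique V E B}"

definition biclique_edges :: "('v \<Rightarrow> 'v \<Rightarrow> bool) \<Rightarrow> 'v set \<Rightarrow> 'v set set" where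
  "biclique_edges E B = {{u, v} | u v. u \<in> B \<and> v \<in> B \<and> E u v}"

definition KBe_adj :: "('v \<Rightarrow> 'v \<Rightarrow> bool) \<Rightarrow> 'v set \<Rightarrow> 'v set \<Rightarrow> bool" where
  "KBe_adj E B B' \<longleftrightarrow> B \<noteq> B' \<and> biclique_edges E B \<inter> biclique_edges E B' \<noteq> {}"

definition Gamma_adj :: "('v \<Rightarrow> 'v \<Rightarrow> bool) \<Rightarrow> 'v set \<Rightarrow> 'v set \<Rightarrow> bool" where
  "Gamma_adj E e f \<longleftrightarrow> e \<noteq> f \<and> (\<exists>v w z. e = {v, w} \<and> f = {v, z} \<and> \<not> E w z)"

end

theory Submission
  imports Defs
begin

lemma reach_refl: "reach V R x x"
  unfolding reach_def by simp

lemma reach_step: "x \<in> V \<Longrightarrow> y \<in> V \<Longrightarrow> R x y \<Longrightarrow> reach V R x y"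
  unfolding reach_def by (simp add: r_into_rtranclp)

lemma reach_trans: "reach V R x y \<Longrightarrow> reach V R y z \<Longrightarrow> reach V R x z"
  unfolding reach_def by (rule rtranclp_trans)

lemma reach_sym:
  assumes "\<And>a b. R a b \<Longrightarrow> R b a" "reach V R x y"
  shows "reach V R y x"
proof -
  have "(\<lambda>x y. x \<in> V \<and> y \<in> V \<and> R x y)\<^sup>*\<^sup>* y x"
    using assms(2) unfolding reach_def
  proof (induction rule: rtranclp_induct)
    case base then show ?case by simp
  next
    case (step y z)
    then have "(\<lambda>x y. x \<in> V \<and> y \<in> V \<and> R x y) z y" using assms(1) by auto
    then show ?case by (rule converse_rtranclp_into_rtranclp[OF _ step(3)])
  qed
  then show ?thesis unfolding reach_def .
qed

lemma comp_eq:
  assumes "\<And>a b. R a b \<Longrightarrow> R b a" "reach V R x y"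
  shows "{z\<in>V. reach V R x z} = {z\<in>V. reach V R y z}"
proof -
  have yx: "reach V R y x" using reach_sym[OF assms] .
  show ?thesis using reach_trans[OF yx] reach_trans[OF assms(2)] by blast
qed

lemma comps_single: "components V R = {V} \<longleftrightarrow> card (components V R) = 1"
proof
  assume "components V R = {V}" then show "card (components V R) = 1" by simp
next
  assume "card (components V R) = 1"
  then obtain S where S: "components V R = {S}" using card_1_singletonE by blast
  then have "S \<in> components V R" by simp
  then have "S \<subseteq> V" unfolding components_def by auto
  moreover have "V \<subseteq> S"
  proof
    fix z assume "z \<in> V"
    then have "{y\<in>V. reach V R z y} \<in> components V R" unfolding components_def by auto
    then have "{y\<in>V. reach V R z y} = S" using S by simp
    then show "z \<in> S" using \<open>z \<in> V\<close> reach_refl[of V R z] by blast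
  qed
  ultimately show "components V R = {V}" using S by auto
qed

lemma conn_comps: "connected_graph V R \<longleftrightarrow> components V R = {V}"
proof
  assume c: "connected_graph V R"
  then have "\<forall>x\<in>V. {y\<in>V. reach V R x y} = V" unfolding connected_graph_def by auto
  then show "components V R = {V}" using c unfolding components_def connected_graph_def by auto
next
  assume c: "components V R = {V}"
  have "V \<noteq> {}"
  proof
    assume "V = {}" then have "components V R = {}" unfolding components_def by auto
    then show False using c by simp
  qed
  moreover have "\<forall>x\<in>V. \<forall>y\<in>V. reach V R x y"
  proof (intro ballI)
    fix x y assume "x \<in> V" "y \<in> V"
    then have "{z\<in>V. reach V R x z} \<in> components V R" unfolding components_def by auto
    then have "{z\<in>V. reach V R x z} = V" using c by simp
    then show "reach V R x y" using \<open>y \<in> V\<close> by blast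
  qed
  ultimately show "connected_graph V R" unfolding connected_graph_def by simp
qed

lemma sg_fin: "simple_graph V E \<Longrightarrow> finite V"
  unfolding simple_graph_def by blast
lemma sg_sym: "simple_graph V E \<Longrightarrow> E a b \<Longrightarrow> E b a"
  unfolding simple_graph_def by blast
lemma sg_irr: "simple_graph V E \<Longrightarrow> \<not> E a a"
  unfolding simple_graph_def by blast

lemma extend_biclique:
  assumes "simple_graph V E" "S \<subseteq> V" "induces_complete_bipartite E S"
  shows "\<exists>B. biclique V E B \<and> S \<subseteq> B"
proof -
  let ?F = "{T. S \<subseteq> T \<and> T \<subseteq> V \<and> induces_complete_bipartite E T}"
  have fin: "finite V" using sg_fin[OF assms(1)] .
  have sub: "?F \<subseteq> Pow V" by blast
  have f1: "finite ?F" by (rule finite_subset[OF sub]) (simp add: fin)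
  have "S \<in> ?F" using assms(2,3) by blast
  then have f2: "?F \<noteq> {}" by blast
  obtain m where m: "m \<in> ?F" "\<forall>b\<in>?F. m \<subseteq> b \<longrightarrow> m = b"
    using finite_has_maximal[OF f1 f2] by blast
  have mF: "S \<subseteq> m" "m \<subseteq> V" "induces_complete_bipartite E m" using m(1) by blast+
  have "\<forall>B'. m \<subseteq> B' \<and> B' \<subseteq> V \<and> induces_complete_bipartite E B' \<longrightarrow> B' = m"
    using m(2) mF(1) by blast
  then have "biclique V E m" unfolding biclique_def using mF by blast
  then show ?thesis using mF by blast
qed

lemma edge_in_biclique:
  assumes g: "simple_graph V E" and e: "e \<in> edges V E"
  shows "\<exists>B. biclique V E B \<and> e \<in> biclique_edges E B"
proof -
  obtain u v where uv: "e = {u,v}" "u \<in> V" "v \<in> V" "E u v" using e unfolding edges_def by auto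
  have "u \<noteq> v" using sg_irr[OF g] uv by metis
  have "induces_complete_bipartite E {u,v}" unfolding induces_complete_bipartite_def
    apply (rule exI[of _ "{u}"], rule exI[of _ "{v}"])
    using sg_irr[OF g] uv \<open>u \<noteq> v\<close> by blast
  moreover have "{u,v} \<subseteq> V" using uv by simp
  ultimately obtain B where "biclique V E B" "{u,v} \<subseteq> B" using extend_biclique[OF g] by blast
  then show ?thesis using uv unfolding biclique_edges_def by auto
qed

lemma edge_E:
  assumes g: "simple_graph V E" and "{v,w} \<in> edges V E"
  shows "E v w \<and> v \<in> V \<and> w \<in> V \<and> v \<noteq> w"
proof -
  obtain a b where ab: "{v,w} = {a,b}" "a \<in> V" "b \<in> V" "E a b" using assms(2) unfolding edges_def by auto
  have "a \<noteq> b" using sg_irr[OF g] ab by metis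
  have "(v = a \<and> w = b) \<or> (v = b \<and> w = a)" using ab(1) \<open>a \<noteq> b\<close> by (auto simp: doubleton_eq_iff)
  then show ?thesis using sg_sym[OF g] ab \<open>a \<noteq> b\<close> by blast
qed

lemma gamma_common:
  assumes g: "simple_graph V E" and e: "e \<in> edges V E" and f: "f \<in> edges V E"
    and ga: "Gamma_adj E e f"
  shows "\<exists>B. biclique V E B \<and> e \<in> biclique_edges E B \<and> f \<in> biclique_edges E B"
proof -
  obtain v w z where vwz: "e \<noteq> f" "e = {v,w}" "f = {v,z}" "\<not> E w z"
    using ga unfolding Gamma_adj_def by auto
  have 1: "E v w \<and> v \<in> V \<and> w \<in> V \<and> v \<noteq> w" using edge_E[OF g] e vwz by simp
  have 2: "E v z \<and> v \<in> V \<and> z \<in> V \<and> v \<noteq> z" using edge_E[OF g] f vwz by simp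
  have "w \<noteq> z" using vwz by auto
  have sym: "\<And>a b. E a b \<Longrightarrow> E b a" and irr: "\<And>a. \<not> E a a"
    using sg_sym[OF g] sg_irr[OF g] by blast+
  have zw: "\<not> E z w" using sym vwz(4) by blast
  have "induces_complete_bipartite E {v,w,z}" unfolding induces_complete_bipartite_def
    apply (rule exI[of _ "{v}"], rule exI[of _ "{w,z}"])
    using irr 1 2 vwz(4) \<open>w \<noteq> z\<close> zw by (auto simp: insert_commute)
  moreover have "{v,w,z} \<subseteq> V" using 1 2 by simp
  ultimately obtain B where "biclique V E B" "{v,w,z} \<subseteq> B" using extend_biclique[OF g] by blast
  then show ?thesis using vwz 1 2 unfolding biclique_edges_def by auto
qed

lemma gamma_star:
  assumes g: "simple_graph V E" "v \<in> V" "w \<in> V" "z \<in> V" "E v w" "E v z" "w = z \<or> \<not> E w z"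
  shows "reach (edges V E) (Gamma_adj E) {v,w} {v,z}"
proof (cases "w = z")
  case True then show ?thesis by (simp add: reach_refl)
next
  case False
  have "v \<noteq> z" using sg_irr[OF g(1)] g(6) by metis
  then have "{v,w} \<noteq> {v,z}" using False by (auto simp: doubleton_eq_iff)
  moreover have "\<not> E w z" using g(7) False by blast
  ultimately have "Gamma_adj E {v,w} {v,z}" unfolding Gamma_adj_def by blast
  moreover have "{v,w} \<in> edges V E" "{v,z} \<in> edges V E" using g(2-6) unfolding edges_def by blast+
  ultimately show ?thesis by (simp add: reach_step)
qed

lemma biclique_edge_form:
  assumes "biclique V E B"
  obtains X Y where "X \<noteq> {}" "Y \<noteq> {}" "X \<inter> Y = {}" "B = X \<union> Y"
        "\<forall>x\<in>X. \<forall>y\<in>Y. E x y" "\<forall>x\<in>X. \<forall>x'\<in>X. \<not> E x x'" "\<forall>y\<in>Y. \<forall>y'\<in>Y. \<not> E y y'"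
proof -
  have "induces_complete_bipartite E B" using assms unfolding biclique_def by blast
  then obtain X Y where h: "X \<noteq> {} \<and> Y \<noteq> {} \<and> X \<inter> Y = {} \<and> B = X \<union> Y
        \<and> (\<forall>x\<in>X. \<forall>y\<in>Y. E x y)
        \<and> (\<forall>x\<in>X. \<forall>x'\<in>X. \<not> E x x')
        \<and> (\<forall>y\<in>Y. \<forall>y'\<in>Y. \<not> E y y')"
    unfolding induces_complete_bipartite_def by (elim exE) (rule that)
  show thesis by (rule that[of X Y]) (use h in blast)+
qed

lemma within_biclique:
  assumes g: "simple_graph V E" and B: "biclique V E B"
    and e: "e \<in> biclique_edges E B" and f: "f \<in> biclique_edges E B"
  shows "reach (edges V E) (Gamma_adj E) e f"
proof -
  obtain X Y where XY: "X \<noteq> {}" "Y \<noteq> {}" "X \<inter> Y = {}" "B = X \<union> Y"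
        "\<forall>x\<in>X. \<forall>y\<in>Y. E x y" "\<forall>x\<in>X. \<forall>x'\<in>X. \<not> E x x'" "\<forall>y\<in>Y. \<forall>y'\<in>Y. \<not> E y y'"
    using biclique_edge_form[OF B] by blast
  have BV: "B \<subseteq> V" using B unfolding biclique_def by simp
  have form: "\<exists>x y. x \<in> X \<and> y \<in> Y \<and> h = {x,y}" if hh: "h \<in> biclique_edges E B" for h
  proof -
    obtain a b where ab: "h = {a,b}" "a \<in> B" "b \<in> B" "E a b"
      using hh unfolding biclique_edges_def by blast
    then have "(a \<in> X \<and> b \<in> Y) \<or> (a \<in> Y \<and> b \<in> X)" using XY by blast
    then show ?thesis using ab by (auto simp: insert_commute)
  qed
  obtain x y where xy: "x \<in> X" "y \<in> Y" "e = {x,y}" using form[OF e] by blast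
  obtain x' y' where xy': "x' \<in> X" "y' \<in> Y" "f = {x',y'}" using form[OF f] by blast
  have sym: "\<And>a b. E a b \<Longrightarrow> E b a" using sg_sym[OF g] by blast
  have V: "x \<in> V" "y \<in> V" "x' \<in> V" "y' \<in> V" using xy xy' XY BV by auto
  have r1: "reach (edges V E) (Gamma_adj E) {x,y} {x,y'}"
    by (rule gamma_star[OF g]) (use V xy xy' XY in auto)
  have yx: "E y' x" "E y' x'" using sym XY(5) xy xy' by blast+
  have r2: "reach (edges V E) (Gamma_adj E) {y',x} {y',x'}"
    by (rule gamma_star[OF g]) (use V xy xy' XY yx in auto)
  have q: "{y',x} = {x,y'}" "{y',x'} = {x',y'}" by auto
  have "reach (edges V E) (Gamma_adj E) {x,y} {x',y'}" using reach_trans[OF r1] r2 unfolding q by blast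
  then show ?thesis using xy xy' by simp
qed

lemma bedges_sub:
  assumes B: "biclique V E B" shows "biclique_edges E B \<subseteq> edges V E"
proof
  fix h assume "h \<in> biclique_edges E B"
  then obtain u v where uv: "h = {u,v}" "u \<in> B" "v \<in> B" "E u v"
    unfolding biclique_edges_def by auto
  have "B \<subseteq> V" using B unfolding biclique_def by simp
  then have "u \<in> V" "v \<in> V" using uv by auto
  then show "h \<in> edges V E" unfolding edges_def using uv by auto
qed

lemma bedges_ne: "biclique V E B \<Longrightarrow> \<exists>e. e \<in> biclique_edges E B"
proof (erule biclique_edge_form)
  fix X Y assume a: "X \<noteq> {}" "Y \<noteq> {}" "B = X \<union> Y" "\<forall>x\<in>X. \<forall>y\<in>Y. E x y"
  obtain x y where "x \<in> X" "y \<in> Y" using a by blast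
  then have "{x,y} \<in> biclique_edges E B" using a unfolding biclique_edges_def by blast
  then show "\<exists>e. e \<in> biclique_edges E B" by blast
qed

lemma share:
  assumes "biclique V E B" "biclique V E B'" "e \<in> biclique_edges E B" "e \<in> biclique_edges E B'"
  shows "reach (bicliques V E) (KBe_adj E) B B'"
proof (cases "B = B'")
  case True then show ?thesis by (simp add: reach_refl)
next
  case False
  then have "KBe_adj E B B'" using assms unfolding KBe_adj_def by blast
  then show ?thesis using assms by (simp add: reach_step bicliques_def)
qed

lemma L1:
  assumes g: "simple_graph V E" and r: "reach (bicliques V E) (KBe_adj E) B B'"
    and B: "biclique V E B"
  shows "\<forall>e\<in>biclique_edges E B. \<forall>e'\<in>biclique_edges E B'. reach (edges V E) (Gamma_adj E) e e'"
proof -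
  have r': "(\<lambda>x y. x \<in> V' \<and> y \<in> V' \<and> R x y)\<^sup>*\<^sup>* a b" if "reach V' R a b" for V' R a b
    using that unfolding reach_def .
  show ?thesis using r'[OF r]
proof (induction rule: rtranclp_induct)
  case base then show ?case using within_biclique[OF g B] by blast
next
  case (step y z)
  then obtain h where h: "h \<in> biclique_edges E y" "h \<in> biclique_edges E z"
    unfolding KBe_adj_def by blast
  have yz: "biclique V E y" "biclique V E z" using step(2) unfolding bicliques_def by auto
  show ?case
  proof (intro ballI)
    fix e e' assume "e \<in> biclique_edges E B" "e' \<in> biclique_edges E z"
    then have "reach (edges V E) (Gamma_adj E) e h" "reach (edges V E) (Gamma_adj E) h e'"
      using step(3) h within_biclique[OF g yz(2)] by blast+
    then show "reach (edges V E) (Gamma_adj E) e e'" by (rule reach_trans)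
  qed
qed
qed

lemma L2:
  assumes g: "simple_graph V E" and r: "reach (edges V E) (Gamma_adj E) e f"
  shows "\<forall>B B'. biclique V E B \<and> e \<in> biclique_edges E B \<and> biclique V E B' \<and> f \<in> biclique_edges E B'
     \<longrightarrow> reach (bicliques V E) (KBe_adj E) B B'"
proof -
  have r': "(\<lambda>x y. x \<in> V' \<and> y \<in> V' \<and> R x y)\<^sup>*\<^sup>* a b" if "reach V' R a b" for V' R a b
    using that unfolding reach_def .
  show ?thesis using r'[OF r]
proof (induction rule: rtranclp_induct)
  case base then show ?case using share by blast
next
  case (step y z)
  obtain D where D: "biclique V E D" "y \<in> biclique_edges E D" "z \<in> biclique_edges E D"
    using gamma_common[OF g] step(2) by blast
  show ?case
  proof (intro allI impI)
    fix B B' assume a: "biclique V E B \<and> e \<in> biclique_edges E B \<and> biclique V E B' \<and> z \<in> biclique_edges E B'"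
    then have "reach (bicliques V E) (KBe_adj E) B D" using step(3) D by blast
    moreover have "reach (bicliques V E) (KBe_adj E) D B'" using share D a by blast
    ultimately show "reach (bicliques V E) (KBe_adj E) B B'" by (rule reach_trans)
  qed
qed
qed

lemma image_comp:
  assumes g: "simple_graph V E" and B: "biclique V E B" and e: "e \<in> biclique_edges E B"
  shows "(\<Union>B'\<in>{B'\<in>bicliques V E. reach (bicliques V E) (KBe_adj E) B B'}. biclique_edges E B')
       = {f \<in> edges V E. reach (edges V E) (Gamma_adj E) e f}"
proof
  show "(\<Union>B'\<in>{B'\<in>bicliques V E. reach (bicliques V E) (KBe_adj E) B B'}. biclique_edges E B')
       \<subseteq> {f \<in> edges V E. reach (edges V E) (Gamma_adj E) e f}"
    using L1[OF g _ B] e bedges_sub unfolding bicliques_def by blast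
next
  show "{f \<in> edges V E. reach (edges V E) (Gamma_adj E) e f} \<subseteq>
       (\<Union>B'\<in>{B'\<in>bicliques V E. reach (bicliques V E) (KBe_adj E) B B'}. biclique_edges E B')"
  proof
    fix f assume f: "f \<in> {f \<in> edges V E. reach (edges V E) (Gamma_adj E) e f}"
    then obtain B' where B': "biclique V E B'" "f \<in> biclique_edges E B'"
      using edge_in_biclique[OF g] by blast
    then have "reach (bicliques V E) (KBe_adj E) B B'" using L2[OF g] f B e by blast
    then show "f \<in> (\<Union>B'\<in>{B'\<in>bicliques V E. reach (bicliques V E) (KBe_adj E) B B'}. biclique_edges E B')"
      using B' unfolding bicliques_def by blast
  qed
qed

theorem mainTheorem3:
  fixes V :: "'v set" and E :: "'v \<Rightarrow> 'v \<Rightarrow> bool"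
  assumes "simple_graph V E" and "connected_graph V E"
  shows "bij_betw (\<lambda>C. \<Union>B\<in>C. biclique_edges E B)
            (components (bicliques V E) (KBe_adj E))
            (components (edges V E) (Gamma_adj E))
       \<and> (connected_graph (bicliques V E) (KBe_adj E)
            \<longleftrightarrow> card (components (edges V E) (Gamma_adj E)) = 1)
       \<and> (connected_graph (bicliques V E) (KBe_adj E)
            \<longleftrightarrow> components (edges V E) (Gamma_adj E) = {edges V E})"
proof -
  note g = assms(1)
  have ksym: "\<And>a b. KBe_adj E a b \<Longrightarrow> KBe_adj E b a" unfolding KBe_adj_def by blast
  have bij: "bij_betw (\<lambda>C. \<Union>B\<in>C. biclique_edges E B)
            (components (bicliques V E) (KBe_adj E))
            (components (edges V E) (Gamma_adj E))"
    unfolding bij_betw_def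
  proof
    show "inj_on (\<lambda>C. \<Union>B\<in>C. biclique_edges E B) (components (bicliques V E) (KBe_adj E))"
    proof (rule inj_onI)
      fix C1 C2 assume c1: "C1 \<in> components (bicliques V E) (KBe_adj E)"
        and c2: "C2 \<in> components (bicliques V E) (KBe_adj E)"
        and eq: "(\<Union>B\<in>C1. biclique_edges E B) = (\<Union>B\<in>C2. biclique_edges E B)"
      obtain B1 where B1: "B1 \<in> bicliques V E" "C1 = {y\<in>bicliques V E. reach (bicliques V E) (KBe_adj E) B1 y}"
        using c1 unfolding components_def by auto
      obtain B2 where B2: "B2 \<in> bicliques V E" "C2 = {y\<in>bicliques V E. reach (bicliques V E) (KBe_adj E) B2 y}"
        using c2 unfolding components_def by auto
      have b1: "biclique V E B1" "biclique V E B2" using B1 B2 unfolding bicliques_def by auto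
      obtain e1 where e1: "e1 \<in> biclique_edges E B1" using bedges_ne[OF b1(1)] by blast
      obtain e2 where e2: "e2 \<in> biclique_edges E B2" using bedges_ne[OF b1(2)] by blast
      have "{f \<in> edges V E. reach (edges V E) (Gamma_adj E) e1 f}
          = {f \<in> edges V E. reach (edges V E) (Gamma_adj E) e2 f}"
        using eq image_comp[OF g b1(1) e1] image_comp[OF g b1(2) e2] B1 B2 by simp
      moreover have "e1 \<in> {f \<in> edges V E. reach (edges V E) (Gamma_adj E) e1 f}"
        using e1 bedges_sub[OF b1(1)] reach_refl[of "edges V E" "Gamma_adj E" e1] by blast
      ultimately have "reach (edges V E) (Gamma_adj E) e2 e1" by blast
      then have "reach (bicliques V E) (KBe_adj E) B2 B1" using L2[OF g] b1 e1 e2 by blast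
      from comp_eq[OF ksym this] show "C1 = C2" using B1 B2 by simp
    qed
  next
    show "(\<lambda>C. \<Union>B\<in>C. biclique_edges E B) ` components (bicliques V E) (KBe_adj E) =
          components (edges V E) (Gamma_adj E)"
    proof
      show "(\<lambda>C. \<Union>B\<in>C. biclique_edges E B) ` components (bicliques V E) (KBe_adj E)
          \<subseteq> components (edges V E) (Gamma_adj E)"
      proof
        fix S assume "S \<in> (\<lambda>C. \<Union>B\<in>C. biclique_edges E B) ` components (bicliques V E) (KBe_adj E)"
        then obtain B where B: "B \<in> bicliques V E"
          "S = (\<Union>B'\<in>{y\<in>bicliques V E. reach (bicliques V E) (KBe_adj E) B y}. biclique_edges E B')"
          unfolding components_def by auto
        have b: "biclique V E B" using B unfolding bicliques_def by simp
        obtain e where e: "e \<in> biclique_edges E B" using bedges_ne[OF b] by blast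
        have "S = {f \<in> edges V E. reach (edges V E) (Gamma_adj E) e f}"
          using B image_comp[OF g b e] by simp
        then show "S \<in> components (edges V E) (Gamma_adj E)"
          unfolding components_def using e bedges_sub[OF b] by blast
      qed
    next
      show "components (edges V E) (Gamma_adj E)
          \<subseteq> (\<lambda>C. \<Union>B\<in>C. biclique_edges E B) ` components (bicliques V E) (KBe_adj E)"
      proof
        fix S assume "S \<in> components (edges V E) (Gamma_adj E)"
        then obtain e where e: "e \<in> edges V E" "S = {f \<in> edges V E. reach (edges V E) (Gamma_adj E) e f}"
          unfolding components_def by auto
        obtain B where B: "biclique V E B" "e \<in> biclique_edges E B" using edge_in_biclique[OF g e(1)] by blast
        have "S = (\<lambda>C. \<Union>B\<in>C. biclique_edges E B) {y\<in>bicliques V E. reach (bicliques V E) (KBe_adj E) B y}"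
          using image_comp[OF g B] e by simp
        moreover have "{y\<in>bicliques V E. reach (bicliques V E) (KBe_adj E) B y} \<in> components (bicliques V E) (KBe_adj E)"
          using B unfolding components_def bicliques_def by auto
        ultimately show "S \<in> (\<lambda>C. \<Union>B\<in>C. biclique_edges E B) ` components (bicliques V E) (KBe_adj E)"
          by blast
      qed
    qed
  qed
  have c: "card (components (bicliques V E) (KBe_adj E)) = card (components (edges V E) (Gamma_adj E))"
    using bij_betw_same_card[OF bij] .
  have 2: "connected_graph (bicliques V E) (KBe_adj E)
            \<longleftrightarrow> card (components (edges V E) (Gamma_adj E)) = 1"
    by (simp only: conn_comps comps_single c)
  have 3: "connected_graph (bicliques V E) (KBe_adj E)
            \<longleftrightarrow> components (edges V E) (Gamma_adj E) = {edges V E}"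
    by (simp only: 2 comps_single)
  show ?thesis using bij 2 3 by blast
qed

end
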